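(* Let $d\ge 1$ and let $F$ be a $d$-uniform Ferrers hypergraph with vertex sets $X^{(j)}=\{1,\dots,n_j\}$, $1\le j\le d$, and let $I(F)$ be its Ferrers ideal. For $k\ge 0$ put \[ \alpha_k(F):=\#\Big\{(i_1,\dots,i_d)\in F : \textstyle\sum_{j=1}^d i_j = k+d\Big\}. \] Then the Boij–Söderberg decomposition of the Betti table of $I(F)$ is \[ \beta(I(F))=\sum_{k\ge 0}\alpha_k(F)\, k!\ \pi^{d,k}, \] where $\pi^{d,k}$ denotes the pure diagram with degree sequence $(d,d+1,\dots,d+k)$.
   Context: All modules are finitely generated graded modules over a standard graded polynomial ring over a field $K$. The Betti table of $M$ is the matrix $\beta(M)=(\beta_{i,j}(M))$, $\beta_{i,j}(M)=\dim_K[\operatorname{Tor}_i(M,K)]_j$, with $i$ the homological and $j$ the internal degree. For an increasing integer sequence $\sigma=(d_0,\dots,d_s)$, the pure diagram $\pi_\sigma$ is the table with entries $\beta_{i,j}=\prod_{0\le l\le s,\ l\ne i}\frac{1}{|d_i-d_l|}$ if $j=d_i$ and $\beta_{i,j}=0$ otherwise. A $d$-uniform Ferrers hypergraph on $X^{(1)}\sqcup\dots\sqcup X^{(d)}$ (each $X^{(j)}=\{1,\dots,n_j\}$ linearly ordered) is a set $F\subseteq X^{(1)}\times\dots\times X^{(d)}$ such that $(i_1,\dots,i_d)\in F$ and $i'_j\le i_j$ for all $j$ imply $(i'_1,\dots,i'_d)\in F$. Its Ferrers ideal $I(F)\subset K[x^{(j)}_i : 1\le j\le d,\ i\in X^{(j)}]$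 is generated by the monomials $x^{(1)}_{i_1}\cdots x^{(d)}_{i_d}$ with $(i_1,\dots,i_d)\in F$. (Graded Betti numbers are unchanged by adjoining further variables.) The Boij–Söderberg decomposition is the unique expression $\beta(M)=\sum a_i\pi_{\sigma_i}$ with positive integers $a_i$ and $\pi_{\sigma_1}<\dots<\pi_{\sigma_t}$ in the partial order where $\pi_{(d_0,\dots,d_s)}\le\pi_{(d'_0,\dots,d'_{s'})}$ iff $s\ge s'$ and $d_i\le d'_i$ for $i\le s'$. *)

theory Defs
  imports Complex_Main
begin

text \<open>A matrix with rows indexed by Tgt and columns indexed by Src, entry A s t.
  Its rank is the maximal number of linearly independent columns.\<close>
definition colrank :: "('a \<Rightarrow> 'b \<Rightarrow> 'k::field) \<Rightarrow> 'a set \<Rightarrow> 'b set \<Rightarrow> nat" where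
  "colrank A Src Tgt = Max {card T | T. T \<subseteq> Src \<and>
     (\<forall>c::'a \<Rightarrow> 'k. (\<forall>y\<in>Tgt. (\<Sum>t\<in>T. c t * A t y) = 0) \<longrightarrow> (\<forall>t\<in>T. c t = 0))}"

text \<open>A monomial ideal is given by
  its membership predicate on monomials (it is spanned over K by these monomials).\<close>

definition var_less :: "nat \<times> nat \<Rightarrow> nat \<times> nat \<Rightarrow> bool" where
  "var_less w v \<longleftrightarrow> fst w < fst v \<or> (fst w = fst v \<and> snd w < snd v)"

text \<open>K-basis of the multidegree-b part of I \<otimes> \<Lambda>^i K^V: elements u \<otimes> e_S with
  u a monomial of I, S a set of i variables, u * x_S = x^b.\<close>
definition koszul_basis ::
  "(nat \<times> nat) set \<Rightarrow> ((nat \<times> nat \<Rightarrow> nat) \<Rightarrow> bool) \<Rightarrow> nat \<Rightarrow> (nat \<times> nat \<Rightarrow> nat) \<Rightarrow> (nat \<times> nat) set set" where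
  "koszul_basis V inI i b = {S. S \<subseteq> V \<and> card S = i \<and> (\<forall>v\<in>S. 1 \<le> b v) \<and>
      inI (\<lambda>v. if v \<in> S then b v - 1 else b v)}"

text \<open>Koszul differential: u \<otimes> e_S \<mapsto> \<Sum>_{v\<in>S} (-1)^{pos} (u x_v) \<otimes> e_{S-{v}}.\<close>
definition koszul_diff :: "(nat \<times> nat) set \<Rightarrow> (nat \<times> nat) set \<Rightarrow> 'k::field" where
  "koszul_diff S T = (\<Sum>v\<in>S. if T = S - {v} then (-1) ^ card {w\<in>S. var_less w v} else 0)"

definition koszul_rank ::
  "'k::field itself \<Rightarrow> (nat \<times> nat) set \<Rightarrow> ((nat \<times> nat \<Rightarrow> nat) \<Rightarrow> bool) \<Rightarrow> nat \<Rightarrow> (nat \<times> nat \<Rightarrow> nat) \<Rightarrow> nat" where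
  "koszul_rank K V inI i b = (if i = 0 then 0 else
      colrank (koszul_diff :: _ \<Rightarrow> _ \<Rightarrow> 'k) (koszul_basis V inI i b) (koszul_basis V inI (i - 1) b))"

text \<open>dim_K Tor_i(I,K)_b = dim H_i of the Koszul complex in multidegree b.\<close>
definition multigraded_betti ::
  "'k::field itself \<Rightarrow> (nat \<times> nat) set \<Rightarrow> ((nat \<times> nat \<Rightarrow> nat) \<Rightarrow> bool) \<Rightarrow> nat \<Rightarrow> (nat \<times> nat \<Rightarrow> nat) \<Rightarrow> nat" where
  "multigraded_betti K V inI i b =
     card (koszul_basis V inI i b) - koszul_rank K V inI i b - koszul_rank K V inI (Suc i) b"

text \<open>Graded Betti table: betti K V inI i j = dim_K [Tor_i(I,K)]_j.\<close>
definition betti ::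
  "'k::field itself \<Rightarrow> (nat \<times> nat) set \<Rightarrow> ((nat \<times> nat \<Rightarrow> nat) \<Rightarrow> bool) \<Rightarrow> nat \<Rightarrow> int \<Rightarrow> rat" where
  "betti K V inI i j = of_nat (\<Sum>b \<in> {b. (\<forall>v. v \<notin> V \<longrightarrow> b v = 0) \<and> int (\<Sum>v\<in>V. b v) = j}.
      multigraded_betti K V inI i b)"

definition pure_diagram :: "int list \<Rightarrow> nat \<Rightarrow> int \<Rightarrow> rat" where
  "pure_diagram \<sigma> i j = (if i < length \<sigma> \<and> j = \<sigma> ! i
     then (\<Prod>l \<in> {0..<length \<sigma>} - {i}. 1 / of_int \<bar>\<sigma> ! i - \<sigma> ! l\<bar>) else 0)"

definition is_degree_seq :: "int list \<Rightarrow> bool" where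
  "is_degree_seq \<sigma> \<longleftrightarrow> \<sigma> \<noteq> [] \<and> sorted_wrt (<) \<sigma>"

definition pure_le :: "int list \<Rightarrow> int list \<Rightarrow> bool" where
  "pure_le \<sigma> \<sigma>' \<longleftrightarrow> length \<sigma>' \<le> length \<sigma> \<and> (\<forall>i < length \<sigma>'. \<sigma> ! i \<le> \<sigma>' ! i)"

definition bs_decomposition :: "(nat \<Rightarrow> int \<Rightarrow> rat) \<Rightarrow> (nat \<times> int list) list \<Rightarrow> bool" where
  "bs_decomposition \<beta> L \<longleftrightarrow>
     (\<forall>(a, \<sigma>) \<in> set L. 0 < a \<and> is_degree_seq \<sigma>) \<and>
     sorted_wrt (\<lambda>x y. pure_le (snd x) (snd y) \<and> snd x \<noteq> snd y) L \<and>
     (\<forall>i j. \<beta> i j = (\<Sum>(a, \<sigma>) \<leftarrow> L. of_nat a * pure_diagram \<sigma> i j))"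

text \<open>d = length n; X^(j+1) = {1..n!j} for j < d (0-based index j).
  Edges are lists p of length d, p!j \<in> X^(j+1).\<close>
definition ferrers_vars :: "nat list \<Rightarrow> (nat \<times> nat) set" where
  "ferrers_vars n = {(j, i). j < length n \<and> 1 \<le> i \<and> i \<le> n ! j}"

definition is_ferrers :: "nat list \<Rightarrow> nat list set \<Rightarrow> bool" where
  "is_ferrers n F \<longleftrightarrow>
     (\<forall>p\<in>F. length p = length n \<and> (\<forall>j < length n. 1 \<le> p ! j \<and> p ! j \<le> n ! j)) \<and>
     (\<forall>p\<in>F. \<forall>q. length q = length n \<and> (\<forall>j < length n. 1 \<le> q ! j \<and> q ! j \<le> p ! j) \<longrightarrow> q \<in> F)"

text \<open>A monomial lies in I(F) iff it is divisible by some generator x^(1)_{p1}...x^(d)_{pd}.\<close>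
definition ferrers_mem :: "nat list set \<Rightarrow> (nat \<times> nat \<Rightarrow> nat) \<Rightarrow> bool" where
  "ferrers_mem F u \<longleftrightarrow> (\<exists>p\<in>F. \<forall>j < length p. 1 \<le> u (j, p ! j))"

definition alpha :: "nat list set \<Rightarrow> nat \<Rightarrow> nat \<Rightarrow> nat" where
  "alpha F d k = card {p \<in> F. sum_list p = k + d}"

end

theory Submission
  imports Defs "HOL-Library.FuncSet"
begin

definition indep :: "('a \<Rightarrow> 'b \<Rightarrow> 'k::field) \<Rightarrow> 'a set \<Rightarrow> 'b set \<Rightarrow> bool" where
  "indep A T Tgt \<longleftrightarrow> (\<forall>c::'a \<Rightarrow> 'k. (\<forall>y\<in>Tgt. (\<Sum>t\<in>T. c t * A t y) = 0) \<longrightarrow> (\<forall>t\<in>T. c t = 0))"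

lemma colrank_alt: "colrank A Src Tgt = Max {card T | T. T \<subseteq> Src \<and> indep A T Tgt}"
  unfolding colrank_def indep_def by simp

lemma colrank_ge:
  assumes "finite Src" "U \<subseteq> Src" "indep A U Tgt"
  shows "card U \<le> colrank A Src Tgt"
  unfolding colrank_alt
proof (rule Max_ge)
  have "{card T | T. T \<subseteq> Src \<and> indep A T Tgt} \<subseteq> card ` Pow Src" by auto
  then show "finite {card T | T. T \<subseteq> Src \<and> indep A T Tgt}"
    using assms(1) finite_subset by blast
  show "card U \<in> {card T | T. T \<subseteq> Src \<and> indep A T Tgt}" using assms by blast
qed

lemma colrank_empty: "colrank A {} Tgt = 0"
  unfolding colrank_alt indep_def by simp

lemma colrank_less:
  assumes "finite Src" "\<not> indep A Src Tgt"
  shows "colrank A Src Tgt < card Src"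
  unfolding colrank_alt
proof (subst Max_less_iff)
  have "{card T | T. T \<subseteq> Src \<and> indep A T Tgt} \<subseteq> card ` Pow Src" by auto
  then show "finite {card T | T. T \<subseteq> Src \<and> indep A T Tgt}"
    using assms(1) finite_subset by blast
  have "indep A {} Tgt" unfolding indep_def by simp
  then show "{card T | T. T \<subseteq> Src \<and> indep A T Tgt} \<noteq> {}" by blast
  show "\<forall>x\<in>{card T | T. T \<subseteq> Src \<and> indep A T Tgt}. x < card Src"
  proof safe
    fix T assume T: "T \<subseteq> Src" "indep A T Tgt"
    then have "T \<noteq> Src" using assms(2) by auto
    then have "T \<subset> Src" using T by auto
    then show "card T < card Src" using assms(1) psubset_card_mono by blast
  qed
qed

lemma kd_remove:
  assumes "finite S" "v \<in> S"
  shows "koszul_diff S (S - {v}) = ((-1) ^ card {w\<in>S. var_less w v} :: 'k::field)"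
proof -
  have "koszul_diff S (S - {v}) = (\<Sum>u\<in>S. if u = v then ((-1) ^ card {w\<in>S. var_less w u} :: 'k) else 0)"
    unfolding koszul_diff_def
    by (rule sum.cong, simp) (use assms in auto)
  also have "\<dots> = (-1) ^ card {w\<in>S. var_less w v}"
    using assms by simp
  finally show ?thesis .
qed

lemma kd_nz:
  assumes "(koszul_diff S T :: 'k::field) \<noteq> 0"
  shows "\<exists>v\<in>S. T = S - {v}"
proof (rule ccontr)
  assume "\<not> ?thesis"
  then have "(koszul_diff S T :: 'k) = 0" unfolding koszul_diff_def
    by (intro sum.neutral) auto
  with assms show False by simp
qed

lemma neg1_pow_nz: "((-1::'k::field) ^ m) \<noteq> 0" by simp

lemma basis_sub: "koszul_basis V inI k b \<subseteq> Pow V"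
  unfolding koszul_basis_def by auto

lemma basis_fin: "finite V \<Longrightarrow> finite (koszul_basis V inI k b)"
  using basis_sub finite_Pow_iff finite_subset by metis

lemma basis_card: "S \<in> koszul_basis V inI k b \<Longrightarrow> card S = k"
  unfolding koszul_basis_def by auto

lemma basis_elem_fin: "finite V \<Longrightarrow> S \<in> koszul_basis V inI k b \<Longrightarrow> finite S"
  unfolding koszul_basis_def using finite_subset by auto

locale matching =
  fixes V :: "(nat \<times> nat) set" and inI :: "(nat \<times> nat \<Rightarrow> nat) \<Rightarrow> bool" and b :: "nat \<times> nat \<Rightarrow> nat"
    and Pt :: "(nat \<times> nat) set \<Rightarrow> bool" and \<tau> :: "(nat \<times> nat) set \<Rightarrow> nat \<times> nat"
    and w :: "(nat \<times> nat) set \<Rightarrow> nat"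
  assumes fin: "finite V"
  and M1: "\<And>k S. S \<in> koszul_basis V inI k b \<Longrightarrow> Pt S \<Longrightarrow> \<tau> S \<notin> S \<Longrightarrow>
      insert (\<tau> S) S \<in> koszul_basis V inI (Suc k) b \<and> Pt (insert (\<tau> S) S) \<and> \<tau> (insert (\<tau> S) S) = \<tau> S"
  and M2: "\<And>k S. S \<in> koszul_basis V inI (Suc k) b \<Longrightarrow> Pt S \<Longrightarrow> \<tau> S \<in> S \<Longrightarrow>
      S - {\<tau> S} \<in> koszul_basis V inI k b \<and> Pt (S - {\<tau> S}) \<and> \<tau> (S - {\<tau> S}) = \<tau> S"
  and M3: "\<And>k t0 t v. t0 \<in> koszul_basis V inI k b \<Longrightarrow> t \<in> koszul_basis V inI k b \<Longrightarrow>
      Pt t0 \<Longrightarrow> \<tau> t0 \<in> t0 \<Longrightarrow> Pt t \<Longrightarrow> \<tau> t \<in> t \<Longrightarrow> v \<notin> t0 - {\<tau> t0} \<Longrightarrow>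
      t = insert v (t0 - {\<tau> t0}) \<Longrightarrow> t \<noteq> t0 \<Longrightarrow> w t0 < w t"
begin

abbreviation "Bas k \<equiv> koszul_basis V inI k b"
definition "Up k = {S \<in> Bas k. Pt S \<and> \<tau> S \<in> S}"
definition "Low k = {S \<in> Bas k. Pt S \<and> \<tau> S \<notin> S}"
definition "Cr k = {S \<in> Bas k. \<not> Pt S}"

lemma Up_indep:
  assumes "k \<noteq> 0"
  shows "indep (koszul_diff :: _ \<Rightarrow> _ \<Rightarrow> 'k::field) (Up k) (Bas (k - 1))"
  unfolding indep_def
proof (intro allI impI ballI, rule ccontr)
  fix c :: "(nat \<times> nat) set \<Rightarrow> 'k" and t1
  assume h: "\<forall>y\<in>Bas (k - 1). (\<Sum>t\<in>Up k. c t * koszul_diff t y) = 0"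
    and t1: "t1 \<in> Up k" "c t1 \<noteq> 0"
  define Z where "Z = {t\<in>Up k. c t \<noteq> 0}"
  have finZ: "finite Z" unfolding Z_def Up_def using basis_fin[OF fin] by auto
  have "Z \<noteq> {}" using t1 Z_def by auto
  obtain t0 where t0: "t0 \<in> Z" "\<forall>t\<in>Z. w t \<le> w t0"
  proof -
    have "Max (w ` Z) \<in> w ` Z" using finZ \<open>Z \<noteq> {}\<close> by (intro Max_in) auto
    then obtain t0 where "t0 \<in> Z" "w t0 = Max (w ` Z)" by auto
    moreover have "\<forall>t\<in>Z. w t \<le> Max (w ` Z)" using finZ by auto
    ultimately show ?thesis using that by auto
  qed
  have t0U: "t0 \<in> Up k" and ct0: "c t0 \<noteq> 0" using t0 Z_def by auto
  have kk: "Suc (k - 1) = k" using assms by simp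
  define y where "y = t0 - {\<tau> t0}"
  have t0B: "t0 \<in> Bas (Suc (k-1))" using t0U kk unfolding Up_def by simp
  have yB: "y \<in> Bas (k - 1)" using M2[OF t0B] t0U unfolding Up_def y_def by auto
  have ft0: "finite t0" using basis_elem_fin[OF fin] t0U unfolding Up_def by auto
  have "\<tau> t0 \<in> t0" using t0U unfolding Up_def by simp
  then have "(koszul_diff t0 y :: 'k) = (-1) ^ card {w\<in>t0. var_less w (\<tau> t0)}"
    unfolding y_def using kd_remove[OF ft0] by blast
  then have kd0: "(koszul_diff t0 y :: 'k) \<noteq> 0" by simp
  have others: "c t * koszul_diff t y = 0" if "t \<in> Up k - {t0}" for t
  proof (rule ccontr)
    assume nz: "c t * koszul_diff t y \<noteq> 0"
    then have "c t \<noteq> 0" and kdt: "(koszul_diff t y :: 'k) \<noteq> 0" by auto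
    then have tZ: "t \<in> Z" using that Z_def by auto
    obtain v where v: "v \<in> t" "y = t - {v}" using kd_nz[OF kdt] by blast
    then have "t = insert v y" "v \<notin> y" by auto
    moreover have "t \<in> Up k" "t \<noteq> t0" using that by auto
    ultimately have "w t0 < w t"
      using M3[of t0 k t v] t0U unfolding Up_def y_def by blast
    with t0(2) tZ show False by auto
  qed
  have "(\<Sum>t\<in>Up k. c t * koszul_diff t y) = c t0 * koszul_diff t0 y + (\<Sum>t\<in>Up k - {t0}. c t * koszul_diff t y)"
    using t0U finZ basis_fin[OF fin] unfolding Up_def
    by (subst sum.remove[of _ t0]) auto
  also have "\<dots> = c t0 * koszul_diff t0 y" using others by (simp add: sum.neutral)
  finally have "c t0 * koszul_diff t0 y = 0" using h yB by simp
  with ct0 kd0 show False by simp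
qed

lemma rank_ge: "card (Up k) \<le> koszul_rank (TYPE('k::field)) V inI k b"
proof (cases "k = 0")
  case True
  have "Up 0 = {}" unfolding Up_def using basis_card basis_elem_fin[OF fin] by fastforce
  then show ?thesis using True by simp
next
  case False
  have "card (Up k) \<le> colrank (koszul_diff :: _ \<Rightarrow> _ \<Rightarrow> 'k) (Bas k) (Bas (k - 1))"
  proof (rule colrank_ge[OF basis_fin[OF fin]])
    show "Up k \<subseteq> Bas k" unfolding Up_def by auto
    show "indep (koszul_diff :: _ \<Rightarrow> _ \<Rightarrow> 'k) (Up k) (Bas (k - 1))" by (rule Up_indep[OF False])
  qed
  then show ?thesis using False unfolding koszul_rank_def by simp
qed

lemma card_Low: "card (Low k) = card (Up (Suc k))"
proof (rule bij_betw_same_card[of "\<lambda>S. insert (\<tau> S) S"], rule bij_betw_byWitness[where f'="\<lambda>S. S - {\<tau> S}"])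
  show "\<forall>a\<in>Low k. insert (\<tau> a) a - {\<tau> (insert (\<tau> a) a)} = a"
    using M1 unfolding Low_def by auto
  show "\<forall>a'\<in>Up (Suc k). insert (\<tau> (a' - {\<tau> a'})) (a' - {\<tau> a'}) = a'"
    using M2 unfolding Up_def by auto
  show "(\<lambda>S. insert (\<tau> S) S) ` Low k \<subseteq> Up (Suc k)"
    using M1 unfolding Low_def Up_def by auto
  show "(\<lambda>S. S - {\<tau> S}) ` Up (Suc k) \<subseteq> Low k"
    using M2 unfolding Low_def Up_def by auto
qed

lemma card_Bas: "card (Bas k) = card (Up k) + card (Low k) + card (Cr k)"
proof -
  have "Bas k = (Up k \<union> Low k) \<union> Cr k" unfolding Up_def Low_def Cr_def by auto
  moreover have "finite (Up k)" "finite (Low k)" "finite (Cr k)"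
    unfolding Up_def Low_def Cr_def using basis_fin[OF fin] by auto
  moreover have "(Up k \<union> Low k) \<inter> Cr k = {}" "Up k \<inter> Low k = {}"
    unfolding Up_def Low_def Cr_def by auto
  ultimately show ?thesis
    by (metis card_Un_disjoint finite_UnI)
qed

theorem betti_le_crit:
  "multigraded_betti (TYPE('k::field)) V inI k b \<le> card (Cr k)"
  using rank_ge[of k, where 'k='k] rank_ge[of "Suc k", where 'k='k] card_Bas[of k] card_Low[of k]
  unfolding multigraded_betti_def by linarith

end

lemma ferrers_mem_cong:
  "(\<And>v. (1 \<le> u v) = (1 \<le> u' v)) \<Longrightarrow> ferrers_mem F u = ferrers_mem F u'"
  unfolding ferrers_mem_def by simp

lemma finite_ferrers_vars: "finite (ferrers_vars n)"
proof -
  have "ferrers_vars n \<subseteq> (\<Union>j<length n. {j} \<times> {1..n!j})"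
    unfolding ferrers_vars_def by auto
  then show ?thesis by (rule finite_subset) auto
qed

lemma nonsqf_betti:
  assumes supp: "\<forall>v. v \<notin> V \<longrightarrow> b v = 0" and finV: "finite V" and v0: "2 \<le> b v0"
  shows "multigraded_betti (TYPE('k::field)) V (ferrers_mem F) i b = 0"
proof -
  have v0V: "v0 \<in> V" using supp v0 by (metis not_numeral_le_zero)
  have cong: "ferrers_mem F (\<lambda>v. if v \<in> insert v0 S then b v - 1 else b v) =
      ferrers_mem F (\<lambda>v. if v \<in> S then b v - 1 else b v)" for S
    by (rule ferrers_mem_cong) (use v0 in auto)
  have cong2: "ferrers_mem F (\<lambda>v. if v \<in> S - {v0} then b v - 1 else b v) =
      ferrers_mem F (\<lambda>v. if v \<in> S then b v - 1 else b v)" for S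
    by (rule ferrers_mem_cong) (use v0 in auto)
  interpret matching V "ferrers_mem F" b "\<lambda>_. True" "\<lambda>_. v0" "\<lambda>_. 0"
  proof
    show "finite V" by fact
    fix k S
    assume S: "S \<in> koszul_basis V (ferrers_mem F) k b" "v0 \<notin> S"
    then have "finite S" using basis_elem_fin[OF finV] by blast
    then show "insert v0 S \<in> koszul_basis V (ferrers_mem F) (Suc k) b \<and> True \<and> v0 = v0"
      using S v0V v0 cong[of S] unfolding koszul_basis_def by auto
  next
    fix k S
    assume S: "S \<in> koszul_basis V (ferrers_mem F) (Suc k) b" "v0 \<in> S"
    then have "finite S" using basis_elem_fin[OF finV] by blast
    then show "S - {v0} \<in> koszul_basis V (ferrers_mem F) k b \<and> True \<and> v0 = v0"
      using S v0V v0 cong2[of S] unfolding koszul_basis_def by auto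
  next
    fix k t0 t v
    assume "v0 \<in> t0" "v0 \<in> t" "v \<notin> t0 - {v0}" "t = insert v (t0 - {v0})" "t \<noteq> t0"
    then show "0 < (0::nat)" by auto
  qed
  have "multigraded_betti (TYPE('k)) V (ferrers_mem F) i b \<le> card (Cr i)"
    by (rule betti_le_crit)
  moreover have "Cr i = {}" unfolding Cr_def by simp
  ultimately show ?thesis by simp
qed

locale sqf =
  fixes n :: "nat list" and F :: "nat list set" and b :: "nat \<times> nat \<Rightarrow> nat"
  assumes fer: "is_ferrers n F"
  and supp: "\<forall>v. v \<notin> ferrers_vars n \<longrightarrow> b v = 0"
  and sq: "\<forall>v. b v \<le> 1"
begin

abbreviation "d \<equiv> length n"
abbreviation "V \<equiv> ferrers_vars n"
definition "B = {v. 1 \<le> b v}"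
definition "freeS S j = {l. (j, l) \<in> B \<and> (j, l) \<notin> S}"
definition "mu S j = (LEAST l. l \<in> freeS S j)"
definition "mul S = map (mu S) [0..<d]"
definition "inK S \<longleftrightarrow> (\<forall>j<d. freeS S j \<noteq> {}) \<and> mul S \<in> F"

lemma B_V: "B \<subseteq> V"
proof
  fix v assume "v \<in> B"
  then have "b v \<noteq> 0" unfolding B_def by simp
  then show "v \<in> V" using supp by metis
qed

lemma B_fin: "finite B" using B_V finite_ferrers_vars[of n] by (rule finite_subset)

lemma B_col: "x \<in> B \<Longrightarrow> fst x < d \<and> 1 \<le> snd x \<and> snd x \<le> n ! fst x"
proof -
  assume "x \<in> B"
  then have "x \<in> V" using B_V by (rule subsetD[rotated])
  then show ?thesis unfolding ferrers_vars_def by (cases x) simp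
qed

lemma F_len: "p \<in> F \<Longrightarrow> length p = d"
proof -
  assume p: "p \<in> F"
  have "\<forall>p\<in>F. length p = length n \<and> (\<forall>j < length n. 1 \<le> p ! j \<and> p ! j \<le> n ! j)"
    using fer unfolding is_ferrers_def by (rule conjunct1)
  then show ?thesis using p by simp
qed

lemma F_down: "p \<in> F \<Longrightarrow> length q = d \<Longrightarrow> (\<forall>j<d. 1 \<le> q ! j \<and> q ! j \<le> p ! j) \<Longrightarrow> q \<in> F"
proof -
  assume a: "p \<in> F" "length q = d" "\<forall>j<d. 1 \<le> q ! j \<and> q ! j \<le> p ! j"
  have "\<forall>p\<in>F. \<forall>q. length q = length n \<and> (\<forall>j < length n. 1 \<le> q ! j \<and> q ! j \<le> p ! j) \<longrightarrow> q \<in> F"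
    using fer unfolding is_ferrers_def by (rule conjunct2)
  then show ?thesis using a by simp
qed

lemma mu_in: "freeS S j \<noteq> {} \<Longrightarrow> mu S j \<in> freeS S j"
proof -
  assume "freeS S j \<noteq> {}"
  then obtain x where "x \<in> freeS S j" by blast
  then show ?thesis unfolding mu_def by (rule LeastI)
qed

lemma mu_le: "l \<in> freeS S j \<Longrightarrow> mu S j \<le> l"
  unfolding mu_def by (rule Least_le)

lemma K_iff:
  assumes "S \<subseteq> B"
  shows "ferrers_mem F (\<lambda>v. if v \<in> S then b v - 1 else b v) \<longleftrightarrow> inK S"
proof -
  have "ferrers_mem F (\<lambda>v. if v \<in> S then b v - 1 else b v) \<longleftrightarrow>
        (\<exists>p\<in>F. \<forall>j<length p. (j, p ! j) \<in> B \<and> (j, p!j) \<notin> S)"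
  proof -
    have key: "(1 \<le> (if v \<in> S then b v - 1 else b v)) \<longleftrightarrow> (v \<in> B \<and> v \<notin> S)" for v
      using sq[rule_format, of v] assms unfolding B_def by auto
    show ?thesis unfolding ferrers_mem_def key ..
  qed
  also have "\<dots> \<longleftrightarrow> inK S"
  proof
    assume "\<exists>p\<in>F. \<forall>j<length p. (j, p ! j) \<in> B \<and> (j, p!j) \<notin> S"
    then obtain p where p: "p \<in> F" "\<forall>j<d. p ! j \<in> freeS S j"
      using F_len unfolding freeS_def by auto
    have ne: "\<forall>j<d. freeS S j \<noteq> {}" using p by auto
    have "mul S \<in> F"
    proof (rule F_down[OF p(1)])
      show "length (mul S) = d" unfolding mul_def by simp
      show "\<forall>j<d. 1 \<le> mul S ! j \<and> mul S ! j \<le> p ! j"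
      proof safe
        fix j assume j: "j < d"
        have "mu S j \<in> freeS S j" using mu_in ne j by auto
        then have "1 \<le> mu S j" using B_col unfolding freeS_def by fastforce
        then show "1 \<le> mul S ! j" using j unfolding mul_def by simp
        show "mul S ! j \<le> p ! j" using j p mu_le unfolding mul_def by simp
      qed
    qed
    with ne show "inK S" unfolding inK_def by simp
  next
    assume "inK S"
    then have h: "\<forall>j<d. mu S j \<in> freeS S j" "mul S \<in> F" using mu_in unfolding inK_def by auto
    show "\<exists>p\<in>F. \<forall>j<length p. (j, p ! j) \<in> B \<and> (j, p!j) \<notin> S"
    proof (rule bexI[OF _ h(2)], intro allI impI)
      fix j assume "j < length (mul S)"
      then have "j < d" unfolding mul_def by simp
      then have "mu S j \<in> freeS S j" "mul S ! j = mu S j" using h(1) unfolding mul_def by auto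
      then show "(j, mul S ! j) \<in> B \<and> (j, mul S ! j) \<notin> S" unfolding freeS_def by simp
    qed
  qed
  finally show ?thesis .
qed

lemma basis_iff: "S \<in> koszul_basis V (ferrers_mem F) k b \<longleftrightarrow> S \<subseteq> B \<and> card S = k \<and> inK S"
proof -
  have "S \<subseteq> V \<and> (\<forall>v\<in>S. 1 \<le> b v) \<longleftrightarrow> S \<subseteq> B" using B_V unfolding B_def by auto
  then show ?thesis unfolding koszul_basis_def using K_iff by auto
qed

definition "T S = {x\<in>B. mu S (fst x) < snd x}"
definition "Pt S \<longleftrightarrow> T S \<noteq> {}"
definition "tau S = (SOME x. x \<in> T S)"
definition "w S = (\<Sum>j<d. mu S j)"

lemma tau_in: "Pt S \<Longrightarrow> tau S \<in> T S"
  unfolding Pt_def tau_def by (simp add: some_in_eq)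

lemma freeS_insert: "freeS (insert (j, l) S) j' = (if j' = j then freeS S j - {l} else freeS S j')"
  unfolding freeS_def by auto

lemma freeS_remove: "(j, l) \<in> B \<Longrightarrow> freeS (S - {(j, l)}) j' = (if j' = j then insert l (freeS S j) else freeS S j')"
  unfolding freeS_def by auto

lemma mu_insert_big:
  assumes "freeS S j \<noteq> {}" "mu S j < l"
  shows "mu (insert (j, l) S) = mu S"
proof
  fix j'
  show "mu (insert (j, l) S) j' = mu S j'"
  proof (cases "j' = j")
    case True
    have "mu S j \<in> freeS S j - {l}" using mu_in[OF assms(1)] assms(2) by auto
    then have "(LEAST x. x \<in> freeS S j - {l}) = mu S j"
      by (intro Least_equality) (auto intro: mu_le)
    then show ?thesis using True unfolding mu_def[of "insert (j,l) S"] freeS_insert by simp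
  next
    case False
    then show ?thesis unfolding mu_def freeS_insert by simp
  qed
qed

lemma mu_remove_big:
  assumes "(j, l) \<in> B" "freeS S j \<noteq> {}" "mu S j < l"
  shows "mu (S - {(j, l)}) = mu S"
proof
  fix j'
  show "mu (S - {(j, l)}) j' = mu S j'"
  proof (cases "j' = j")
    case True
    have "(LEAST x. x \<in> insert l (freeS S j)) = mu S j"
      using mu_in[OF assms(2)] assms(3)
      by (intro Least_equality) (auto intro: mu_le)
    then show ?thesis using True unfolding mu_def[of "S - {(j,l)}"] freeS_remove[OF assms(1)] by simp
  next
    case False
    then show ?thesis unfolding mu_def freeS_remove[OF assms(1)] by simp
  qed
qed

lemma mu_insert_min:
  assumes "freeS S j \<noteq> {}" "freeS (insert (j, mu S j) S) j \<noteq> {}"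
  shows "mu S j < mu (insert (j, mu S j) S) j"
proof -
  have "mu (insert (j, mu S j) S) j \<in> freeS S j - {mu S j}"
    using mu_in[OF assms(2)] unfolding freeS_insert by simp
  then show ?thesis using mu_le[of _ S j] by fastforce
qed

lemma mu_insert_other: "j' \<noteq> j \<Longrightarrow> mu (insert (j, l) S) j' = mu S j'"
  unfolding mu_def freeS_insert by simp

lemma T_cong: "mu S = mu S' \<Longrightarrow> T S = T S'" unfolding T_def by simp

lemma M1:
  assumes S: "S \<in> koszul_basis V (ferrers_mem F) k b" and P: "Pt S" and nt: "tau S \<notin> S"
  shows "insert (tau S) S \<in> koszul_basis V (ferrers_mem F) (Suc k) b \<and> Pt (insert (tau S) S) \<and> tau (insert (tau S) S) = tau S"
proof -
  obtain j l where jl: "tau S = (j, l)" by fastforce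
  have inT: "(j, l) \<in> T S" using tau_in[OF P] jl by simp
  then have jlB: "(j, l) \<in> B" and lt: "mu S j < l" unfolding T_def by auto
  have Sb: "S \<subseteq> B" "card S = k" "inK S" using S basis_iff by auto
  have jd: "j < d" using B_col[OF jlB] by simp
  have ne: "freeS S j \<noteq> {}" using Sb(3) jd unfolding inK_def by auto
  have mueq: "mu (insert (j, l) S) = mu S" by (rule mu_insert_big[OF ne lt])
  have fin: "finite S" using Sb(1) B_fin finite_subset by blast
  have "inK (insert (j, l) S)"
  proof -
    have "\<forall>j'<d. freeS (insert (j, l) S) j' \<noteq> {}"
      using Sb(3) mu_in[OF ne] lt unfolding inK_def freeS_insert by auto
    moreover have "mul (insert (j, l) S) = mul S" unfolding mul_def mueq ..
    ultimately show ?thesis using Sb(3) unfolding inK_def by simp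
  qed
  then have "insert (j, l) S \<in> koszul_basis V (ferrers_mem F) (Suc k) b"
    using basis_iff Sb jlB fin nt jl by auto
  moreover have "T (insert (j, l) S) = T S" using T_cong[OF mueq] .
  ultimately show ?thesis using P jl unfolding Pt_def tau_def by simp
qed

lemma M2:
  assumes S: "S \<in> koszul_basis V (ferrers_mem F) (Suc k) b" and P: "Pt S" and nt: "tau S \<in> S"
  shows "S - {tau S} \<in> koszul_basis V (ferrers_mem F) k b \<and> Pt (S - {tau S}) \<and> tau (S - {tau S}) = tau S"
proof -
  obtain j l where jl: "tau S = (j, l)" by fastforce
  have inT: "(j, l) \<in> T S" using tau_in[OF P] jl by simp
  then have jlB: "(j, l) \<in> B" and lt: "mu S j < l" unfolding T_def by auto
  have Sb: "S \<subseteq> B" "card S = Suc k" "inK S" using S basis_iff by auto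
  have jd: "j < d" using B_col[OF jlB] by simp
  have ne: "freeS S j \<noteq> {}" using Sb(3) jd unfolding inK_def by auto
  have mueq: "mu (S - {(j, l)}) = mu S" by (rule mu_remove_big[OF jlB ne lt])
  have fin: "finite S" using Sb(1) B_fin finite_subset by blast
  have "inK (S - {(j, l)})"
  proof -
    have "\<forall>j'<d. freeS (S - {(j, l)}) j' \<noteq> {}"
      using Sb(3) unfolding inK_def freeS_remove[OF jlB] by auto
    moreover have "mul (S - {(j, l)}) = mul S" unfolding mul_def mueq ..
    ultimately show ?thesis using Sb(3) unfolding inK_def by simp
  qed
  then have "S - {(j, l)} \<in> koszul_basis V (ferrers_mem F) k b"
    using basis_iff Sb jlB fin nt jl by auto
  moreover have "T (S - {(j, l)}) = T S" using T_cong[OF mueq] .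
  ultimately show ?thesis using P jl unfolding Pt_def tau_def by simp
qed

lemma M3:
  assumes t0: "t0 \<in> koszul_basis V (ferrers_mem F) k b" and t: "t \<in> koszul_basis V (ferrers_mem F) k b"
    and P0: "Pt t0" "tau t0 \<in> t0" and P: "Pt t" "tau t \<in> t"
    and v: "v \<notin> t0 - {tau t0}" and teq: "t = insert v (t0 - {tau t0})" and ne: "t \<noteq> t0"
  shows "w t0 < w t"
proof -
  define y where "y = t0 - {tau t0}"
  obtain j0 l0 where jl0: "tau t0 = (j0, l0)" by fastforce
  have inT: "(j0, l0) \<in> T t0" using tau_in[OF P0(1)] jl0 by simp
  then have jlB0: "(j0, l0) \<in> B" and lt0: "mu t0 j0 < l0" unfolding T_def by auto
  have t0b: "t0 \<subseteq> B" "inK t0" using t0 basis_iff by auto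
  have tb: "t \<subseteq> B" "inK t" using t basis_iff by auto
  have ne0: "freeS t0 j0 \<noteq> {}" using t0b(2) B_col[OF jlB0] unfolding inK_def by auto
  have muy: "mu y = mu t0" unfolding y_def jl0 by (rule mu_remove_big[OF jlB0 ne0 lt0])
  have vne: "v \<noteq> tau t0" using teq ne P0(2) by auto
  have vB: "v \<in> B" using teq tb(1) by auto
  obtain j l where jl: "v = (j, l)" by fastforce
  have jd: "j < d" using B_col[OF vB] jl by simp
  have lfree: "l \<in> freeS y j" using vB v jl unfolding y_def freeS_def by auto
  have ney: "freeS y j \<noteq> {}" using lfree by auto
  have tyv: "t = insert (j, l) y" using teq jl y_def by simp
  show ?thesis
  proof (cases "l = mu y j")
    case False
    then have "mu y j < l" using mu_le[OF lfree] by simp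
    then have "mu t = mu y" using mu_insert_big[OF ney] tyv by simp
    then have "T t = T t0" using muy by (intro T_cong) simp
    then have "tau t = tau t0" unfolding tau_def by simp
    moreover have "tau t0 \<notin> t" using tyv vne jl unfolding y_def by auto
    ultimately have False using P(2) by metis
    then show ?thesis ..
  next
    case True
    have net: "freeS t j \<noteq> {}" using tb(2) jd unfolding inK_def by auto
    have lt: "mu y j < mu t j" using mu_insert_min[OF ney] net tyv True by simp
    moreover have "\<forall>j'<d. mu y j' \<le> mu t j'"
    proof (intro allI impI)
      fix j' assume "j' < d"
      show "mu y j' \<le> mu t j'"
      proof (cases "j' = j")
        case True then show ?thesis using lt by simp
      next
        case False then show ?thesis using mu_insert_other[OF False] tyv by simp
      qed
    qed
    ultimately have "(\<Sum>j<d. mu y j) < (\<Sum>j<d. mu t j)"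
      using jd by (intro sum_strict_mono_ex1) auto
    then show ?thesis unfolding w_def muy .
  qed
qed

end

context sqf begin

definition "mx j = Max {l. (j, l) \<in> B}"
definition "Pm = (\<lambda>j. (j, mx j)) ` {..<d}"
definition "goodB \<longleftrightarrow> (\<forall>j<d. \<exists>l. (j, l) \<in> B) \<and> map mx [0..<d] \<in> F"

lemma colfin: "finite {l. (j, l) \<in> B}"
proof -
  have "{l. (j, l) \<in> B} \<subseteq> snd ` B" by force
  then show ?thesis using B_fin finite_subset by blast
qed

lemma mx_in: "(j, l) \<in> B \<Longrightarrow> (j, mx j) \<in> B"
proof -
  assume "(j, l) \<in> B"
  then have "{l. (j, l) \<in> B} \<noteq> {}" by blast
  then have "mx j \<in> {l. (j, l) \<in> B}" unfolding mx_def using colfin by (rule Max_in[rotated])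
  then show ?thesis by simp
qed

lemma mx_ge: "(j, l) \<in> B \<Longrightarrow> l \<le> mx j"
  unfolding mx_def using colfin by (intro Max_ge) auto

lemma card_Pm: "card Pm = d"
  unfolding Pm_def by (subst card_image) (auto simp: inj_on_def)

lemma Pm_sub: "goodB \<Longrightarrow> Pm \<subseteq> B"
  unfolding goodB_def Pm_def using mx_in by blast

lemma crit:
  assumes S: "S \<in> koszul_basis V (ferrers_mem F) i b" and nP: "\<not> Pt S"
  shows "S = B - Pm \<and> i + d = card B \<and> goodB"
proof -
  have Sb: "S \<subseteq> B" "card S = i" "inK S" using S basis_iff by auto
  have TE: "\<forall>x\<in>B. \<not> mu S (fst x) < snd x" using nP unfolding Pt_def T_def by auto
  have mxeq: "mx j = mu S j \<and> (j, mu S j) \<in> B \<and> (j, mu S j) \<notin> S" if j: "j < d" for j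
  proof -
    have "freeS S j \<noteq> {}" using Sb(3) j unfolding inK_def by auto
    then have mi: "mu S j \<in> freeS S j" by (rule mu_in)
    then have inB: "(j, mu S j) \<in> B" "(j, mu S j) \<notin> S" unfolding freeS_def by auto
    have "\<forall>l. (j, l) \<in> B \<longrightarrow> l \<le> mu S j" using TE by force
    then have "mx j = mu S j" unfolding mx_def using colfin inB by (intro Max_eqI) auto
    with inB show ?thesis by simp
  qed
  have good: "goodB" unfolding goodB_def
  proof
    show "\<forall>j<d. \<exists>l. (j, l) \<in> B" using mxeq by blast
    have "map mx [0..<d] = mul S" unfolding mul_def using mxeq by simp
    then show "map mx [0..<d] \<in> F" using Sb(3) unfolding inK_def by simp
  qed
  have Seq: "S = B - Pm"
  proof
    show "S \<subseteq> B - Pm"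
    proof
      fix x assume xS: "x \<in> S"
      then have xB: "x \<in> B" using Sb(1) by auto
      moreover have "x \<notin> Pm"
      proof
        assume "x \<in> Pm"
        then obtain j where "j < d" "x = (j, mx j)" unfolding Pm_def by auto
        then show False using mxeq xS by auto
      qed
      ultimately show "x \<in> B - Pm" by simp
    qed
  next
    show "B - Pm \<subseteq> S"
    proof
      fix x assume x: "x \<in> B - Pm"
      obtain j l where jl: "x = (j, l)" by fastforce
      have jd: "j < d" using B_col x jl by fastforce
      have "l \<noteq> mx j" using x jl jd unfolding Pm_def by auto
      moreover have "l \<le> mx j" using mx_ge x jl by auto
      ultimately have lt: "l < mu S j" using mxeq[OF jd] by simp
      show "x \<in> S"
      proof (rule ccontr)
        assume "x \<notin> S"
        then have "l \<in> freeS S j" using x jl unfolding freeS_def by auto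
        then show False using mu_le lt by fastforce
      qed
    qed
  qed
  have "card S = card B - card Pm" using Seq Pm_sub[OF good] B_fin by (simp add: card_Diff_subset finite_subset)
  moreover have "card Pm \<le> card B" using Pm_sub[OF good] B_fin by (rule card_mono[rotated])
  ultimately have "i + d = card B" using Sb(2) card_Pm by simp
  with Seq good show ?thesis by simp
qed

lemma sqf_upper:
  "multigraded_betti (TYPE('k::field)) V (ferrers_mem F) i b \<le> (if goodB \<and> i + d = card B then 1 else 0)"
proof -
  interpret matching V "ferrers_mem F" b Pt tau w
  proof
    show "finite V" by (rule finite_ferrers_vars)
  qed (use M1 M2 M3 in auto)
  have "multigraded_betti (TYPE('k)) V (ferrers_mem F) i b \<le> card (Cr i)"
    by (rule betti_le_crit)
  moreover have "Cr i \<subseteq> (if goodB \<and> i + d = card B then {B - Pm} else {})"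
    unfolding Cr_def using crit by auto
  then have "card (Cr i) \<le> (if goodB \<and> i + d = card B then 1 else 0)"
    by (cases "goodB \<and> i + d = card B") (auto intro: card_mono[of "{B - Pm}", simplified] simp: subset_singleton_iff)
  ultimately show ?thesis by linarith
qed

end

lemma sum_one_extra:
  fixes f :: "nat \<Rightarrow> nat"
  assumes ge: "\<forall>j<d. 1 \<le> f j" and s: "(\<Sum>j<d. f j) = d + 1"
  shows "\<exists>j0<d. f j0 = 2 \<and> (\<forall>j<d. j \<noteq> j0 \<longrightarrow> f j = 1)"
proof -
  define g where "g j = f j - 1" for j
  have "(\<Sum>j<d. g j) = (\<Sum>j<d. f j) - (\<Sum>j<d. (1::nat))"
    unfolding g_def using ge by (intro sum_subtractf_nat) auto
  then have sg: "(\<Sum>j<d. g j) = 1" using s by simp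
  then obtain j0 where j0: "j0 < d" "g j0 \<noteq> 0"
    by (metis (no_types, lifting) lessThan_iff sum.neutral zero_neq_one)
  have "(\<Sum>j<d. g j) = g j0 + (\<Sum>j\<in>{..<d} - {j0}. g j)"
    using j0 by (subst sum.remove[of _ j0]) auto
  then have "g j0 = 1" "(\<Sum>j\<in>{..<d} - {j0}. g j) = 0" using sg j0 by linarith+
  then have "\<forall>j<d. j \<noteq> j0 \<longrightarrow> g j = 0" by simp
  then show ?thesis using j0 \<open>g j0 = 1\<close> ge unfolding g_def
    by (intro exI[of _ j0]) (auto, metis One_nat_def Suc_pred diff_is_0_eq' le_antisym le_numeral_extra(4) not_one_le_zero)
qed

lemma card_less_insert:
  assumes "x \<notin> y" "finite y"
  shows "card {w \<in> insert x y. var_less w r} = card {w\<in>y. var_less w r} + (if var_less x r then 1 else 0)"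
proof (cases "var_less x r")
  case True
  then have "{w \<in> insert x y. var_less w r} = insert x {w\<in>y. var_less w r}" by auto
  then show ?thesis using assms True by simp
next
  case False
  then have "{w \<in> insert x y. var_less w r} = {w\<in>y. var_less w r}" by auto
  then show ?thesis using False by simp
qed

lemma var_less_irrefl: "\<not> var_less x x" unfolding var_less_def by simp

context sqf begin

definition "Nsg t = (\<Sum>r\<in>B - t. card {w\<in>t. var_less w r})"

lemma inK_good:
  assumes good: "goodB" and S: "S \<subseteq> B" and ne: "\<forall>j<d. freeS S j \<noteq> {}"
  shows "inK S"
proof -
  have "mul S \<in> F"
  proof (rule F_down)
    show "map mx [0..<d] \<in> F" using good unfolding goodB_def by simp
    show "length (mul S) = d" unfolding mul_def by simp
    show "\<forall>j<d. 1 \<le> mul S ! j \<and> mul S ! j \<le> map mx [0..<d] ! j"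
    proof safe
      fix j assume j: "j < d"
      have "mu S j \<in> freeS S j" using mu_in ne j by auto
      then have inB: "(j, mu S j) \<in> B" unfolding freeS_def by auto
      then show "1 \<le> mul S ! j" using B_col[OF inB] j unfolding mul_def by simp
      show "mul S ! j \<le> map mx [0..<d] ! j" using mx_ge[OF inB] j unfolding mul_def by simp
    qed
  qed
  with ne show ?thesis unfolding inK_def by simp
qed

lemma top_bound:
  assumes S: "S \<in> koszul_basis V (ferrers_mem F) k b"
  shows "k + d \<le> card B"
proof -
  have Sb: "S \<subseteq> B" "card S = k" "inK S" using S basis_iff by auto
  define Q where "Q = (\<lambda>j. (j, mu S j)) ` {..<d}"
  have "Q \<subseteq> B - S" unfolding Q_def using Sb(3) mu_in unfolding inK_def freeS_def by fastforce
  moreover have "card Q = d" unfolding Q_def by (subst card_image) (auto simp: inj_on_def)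
  ultimately have "d \<le> card (B - S)" using B_fin by (metis card_mono finite_Diff)
  moreover have "card (B - S) = card B - card S" using Sb(1) B_fin by (simp add: card_Diff_subset finite_subset)
  moreover have "card S \<le> card B" using Sb(1) B_fin card_mono by blast
  ultimately show ?thesis using Sb(2) by linarith
qed

lemma freeS_fin: "finite (freeS S j)"
  using colfin[of j] unfolding freeS_def by (rule finite_subset[rotated]) auto

lemma cycle_zero:
  assumes good: "goodB" and yB: "y \<subseteq> B" and yK: "\<forall>j<d. freeS y j \<noteq> {}"
    and cy: "card y + d + 1 = card B"
  shows "(\<Sum>t\<in>koszul_basis V (ferrers_mem F) (Suc (card y)) b.
            ((-1::'k::field) ^ Nsg t) * koszul_diff t y) = 0"
proof -
  have fy: "finite y" using yB B_fin finite_subset by blast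
  have "card (B - y) = d + 1" using cy yB B_fin by (simp add: card_Diff_subset fy)
  moreover have Bdec: "B - y = (\<Union>j\<in>{..<d}. Pair j ` freeS y j)"
  proof
    show "B - y \<subseteq> (\<Union>j\<in>{..<d}. Pair j ` freeS y j)"
    proof
      fix x assume x: "x \<in> B - y"
      obtain j l where jl: "x = (j, l)" by fastforce
      have "j < d" using B_col x jl by fastforce
      moreover have "l \<in> freeS y j" using x jl unfolding freeS_def by auto
      ultimately show "x \<in> (\<Union>j\<in>{..<d}. Pair j ` freeS y j)" using jl by blast
    qed
    show "(\<Union>j\<in>{..<d}. Pair j ` freeS y j) \<subseteq> B - y" unfolding freeS_def by auto
  qed
  moreover have "card (\<Union>j\<in>{..<d}. Pair j ` freeS y j) = (\<Sum>j<d. card (Pair j ` freeS y j))"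
    by (rule card_UN_disjoint) (auto simp: freeS_fin)
  moreover have "\<And>j. card (Pair j ` freeS y j) = card (freeS y j)"
    by (rule card_image) (auto simp: inj_on_def)
  ultimately have sumc: "(\<Sum>j<d. card (freeS y j)) = d + 1" by simp
  have "\<forall>j<d. 1 \<le> card (freeS y j)" using yK freeS_fin by (simp add: Suc_leI card_gt_0_iff)
  then obtain j0 where j0: "j0 < d" "card (freeS y j0) = 2" "\<forall>j<d. j \<noteq> j0 \<longrightarrow> card (freeS y j) = 1"
    using sum_one_extra[OF _ sumc] by blast
  obtain x1 x2 where xx: "freeS y j0 = {x1, x2}" "x1 < x2"
  proof -
    obtain u v where uv: "freeS y j0 = {u, v}" "u \<noteq> v" using j0(2) card_2_iff by metis
    then show ?thesis
    proof (cases "u < v")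
      case True then show ?thesis using that[of u v] uv by simp
    next
      case False then have "v < u" using uv(2) by simp
      then show ?thesis using that[of v u] uv by (simp add: insert_commute)
    qed
  qed
  define v1 where "v1 = (j0, x1)"
  define v2 where "v2 = (j0, x2)"
  define t1 where "t1 = insert v1 y"
  define t2 where "t2 = insert v2 y"
  have v1B: "v1 \<in> B" "v1 \<notin> y" and v2B: "v2 \<in> B" "v2 \<notin> y"
    using xx(1) unfolding v1_def v2_def freeS_def by auto
  have v12: "v1 \<noteq> v2" using xx(2) unfolding v1_def v2_def by auto
  define Bas where "Bas = koszul_basis V (ferrers_mem F) (Suc (card y)) b"
  have t1B: "t1 \<in> Bas"
  proof -
    have "\<forall>j<d. freeS t1 j \<noteq> {}"
      using yK xx v12 unfolding t1_def v1_def freeS_insert by auto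
    then have "inK t1" using inK_good[OF good] yB v1B unfolding t1_def by auto
    then show ?thesis unfolding Bas_def basis_iff t1_def using yB v1B fy by auto
  qed
  have t2B: "t2 \<in> Bas"
  proof -
    have "\<forall>j<d. freeS t2 j \<noteq> {}"
      using yK xx v12 unfolding t2_def v2_def freeS_insert by auto
    then have "inK t2" using inK_good[OF good] yB v2B unfolding t2_def by auto
    then show ?thesis unfolding Bas_def basis_iff t2_def using yB v2B fy by auto
  qed
  have t12: "t1 \<noteq> t2" using v12 v1B v2B unfolding t1_def t2_def by auto
  define g where "g t = ((-1::'k) ^ Nsg t) * koszul_diff t y" for t
  have supp0: "g t = 0" if t: "t \<in> Bas - {t1, t2}" for t
  proof (rule ccontr)
    assume "g t \<noteq> 0"
    then have "(koszul_diff t y :: 'k) \<noteq> 0" unfolding g_def by auto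
    then obtain v where v: "v \<in> t" "y = t - {v}" using kd_nz by blast
    then have tv: "t = insert v y" "v \<notin> y" by auto
    have "t \<in> Bas" using t by blast
    then have tb: "t \<subseteq> B" "inK t" unfolding Bas_def basis_iff by auto
    obtain j l where jl: "v = (j, l)" by fastforce
    have vB: "v \<in> B" using tb v by auto
    have jd: "j < d" using B_col[OF vB] jl by simp
    have lf: "l \<in> freeS y j" using vB tv jl unfolding freeS_def by auto
    have "freeS t j \<noteq> {}" using tb(2) jd unfolding inK_def by auto
    then have "freeS y j - {l} \<noteq> {}" using tv jl freeS_insert by simp
    then have "card (freeS y j) \<noteq> 1" using lf by (auto simp: card_1_singleton_iff)
    then have "j = j0" using j0 jd by auto
    then have "v = v1 \<or> v = v2" using lf xx jl unfolding v1_def v2_def by auto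
    then have "t = t1 \<or> t = t2" using tv unfolding t1_def t2_def by auto
    then show False using t by auto
  qed
  have finBas: "finite Bas" unfolding Bas_def by (rule basis_fin[OF finite_ferrers_vars])
  have "(\<Sum>t\<in>Bas. g t) = (\<Sum>t\<in>{t1, t2}. g t)"
    using finBas t1B t2B supp0 by (intro sum.mono_neutral_right) auto
  also have "\<dots> = g t1 + g t2" using t12 by simp
  also have "\<dots> = 0"
  proof -
    define a where "a = card {w\<in>y. var_less w v1}"
    define bb where "bb = card {w\<in>y. var_less w v2}"
    have kd1: "(koszul_diff t1 y :: 'k) = (-1) ^ a"
    proof -
      have "y = t1 - {v1}" using v1B unfolding t1_def by auto
      moreover have "{w\<in>t1. var_less w v1} = {w\<in>y. var_less w v1}"
        unfolding t1_def using var_less_irrefl by auto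
      ultimately show ?thesis using kd_remove[of t1 v1] fy unfolding a_def t1_def by simp
    qed
    have kd2: "(koszul_diff t2 y :: 'k) = (-1) ^ bb"
    proof -
      have "y = t2 - {v2}" using v2B unfolding t2_def by auto
      moreover have "{w\<in>t2. var_less w v2} = {w\<in>y. var_less w v2}"
        unfolding t2_def using var_less_irrefl by auto
      ultimately show ?thesis using kd_remove[of t2 v2] fy unfolding bb_def t2_def by simp
    qed
    define Ow where "Ow = B - y - {v1, v2}"
    have Owcol: "fst r \<noteq> j0" if "r \<in> Ow" for r
    proof
      assume "fst r = j0"
      then have "snd r \<in> freeS y j0" using that unfolding Ow_def freeS_def by (cases r) auto
      then have "r = v1 \<or> r = v2" using xx \<open>fst r = j0\<close> unfolding v1_def v2_def by (cases r) auto
      then show False using that unfolding Ow_def by auto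
    qed
    have finOw: "finite Ow" unfolding Ow_def using B_fin by simp
    define P where "P = (\<Sum>r\<in>Ow. card {w\<in>y. var_less w r} + (if var_less v1 r then 1 else 0))"
    have v12less: "var_less v1 r = var_less v2 r" if "r \<in> Ow" for r
      using Owcol[OF that] unfolding var_less_def v1_def v2_def by auto
    have B1: "B - t1 = insert v2 Ow" using v2B v12 unfolding Ow_def t1_def by auto
    have B2: "B - t2 = insert v1 Ow" using v1B v12 unfolding Ow_def t2_def by auto
    have v2Ow: "v2 \<notin> Ow" and v1Ow: "v1 \<notin> Ow" unfolding Ow_def by auto
    have N1: "Nsg t1 = bb + 1 + P"
    proof -
      have "Nsg t1 = card {w\<in>t1. var_less w v2} + (\<Sum>r\<in>Ow. card {w\<in>t1. var_less w r})"
        unfolding Nsg_def B1 using finOw v2Ow by simp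
      moreover have "card {w\<in>t1. var_less w v2} = bb + 1"
      proof -
        have "var_less v1 v2" using xx(2) unfolding v1_def v2_def var_less_def by simp
        then show ?thesis unfolding t1_def bb_def using card_less_insert[OF v1B(2) fy, of v2] by simp
      qed
      moreover have "(\<Sum>r\<in>Ow. card {w\<in>t1. var_less w r}) = P"
        unfolding P_def t1_def using card_less_insert[OF v1B(2) fy] by simp
      ultimately show ?thesis by simp
    qed
    have N2: "Nsg t2 = a + P"
    proof -
      have "Nsg t2 = card {w\<in>t2. var_less w v1} + (\<Sum>r\<in>Ow. card {w\<in>t2. var_less w r})"
        unfolding Nsg_def B2 using finOw v1Ow by simp
      moreover have "card {w\<in>t2. var_less w v1} = a"
      proof -
        have "\<not> var_less v2 v1" using xx(2) unfolding v1_def v2_def var_less_def by simp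
        then show ?thesis unfolding t2_def a_def using card_less_insert[OF v2B(2) fy, of v1] by simp
      qed
      moreover have "(\<Sum>r\<in>Ow. card {w\<in>t2. var_less w r}) = P"
        unfolding P_def t2_def using card_less_insert[OF v2B(2) fy] v12less
        by (intro sum.cong) auto
      ultimately show ?thesis by simp
    qed
    show ?thesis unfolding g_def N1 N2 kd1 kd2 by (simp add: power_add)
  qed
  finally show ?thesis unfolding Bas_def g_def .
qed

end

context sqf begin

lemma sqf_lower:
  assumes good: "goodB" and ci: "i + d = card B"
  shows "1 \<le> multigraded_betti (TYPE('k::field)) V (ferrers_mem F) i b"
proof -
  define Bas where "Bas k = koszul_basis V (ferrers_mem F) k b" for k
  define Sc where "Sc = B - Pm"
  have finBas: "finite (Bas k)" for k unfolding Bas_def by (rule basis_fin[OF finite_ferrers_vars])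
  have ScB: "Sc \<in> Bas i"
  proof -
    have "\<forall>j<d. freeS Sc j \<noteq> {}"
    proof (intro allI impI)
      fix j assume j: "j < d"
      then obtain l where "(j, l) \<in> B" using good unfolding goodB_def by auto
      then have "(j, mx j) \<in> B" by (rule mx_in)
      moreover have "(j, mx j) \<in> Pm" unfolding Pm_def using j by auto
      ultimately have "mx j \<in> freeS Sc j" unfolding freeS_def Sc_def by auto
      then show "freeS Sc j \<noteq> {}" by auto
    qed
    then have "inK Sc" using inK_good[OF good] unfolding Sc_def by auto
    moreover have "card Sc = i" unfolding Sc_def using Pm_sub[OF good] B_fin card_Pm ci
      by (simp add: card_Diff_subset finite_subset)
    ultimately show ?thesis unfolding Bas_def basis_iff Sc_def by auto
  qed
  have emp: "Bas (Suc i) = {}"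
  proof (rule ccontr)
    assume "Bas (Suc i) \<noteq> {}"
    then obtain S where "S \<in> Bas (Suc i)" by blast
    then have "Suc i + d \<le> card B" unfolding Bas_def by (rule top_bound)
    with ci show False by simp
  qed
  have r1: "koszul_rank (TYPE('k)) V (ferrers_mem F) (Suc i) b = 0"
    unfolding koszul_rank_def using emp unfolding Bas_def by (simp add: colrank_empty)
  have "koszul_rank (TYPE('k)) V (ferrers_mem F) i b < card (Bas i)"
  proof (cases "i = 0")
    case True
    then show ?thesis unfolding koszul_rank_def using ScB finBas[of i] card_gt_0_iff by auto
  next
    case False
    have "\<not> indep (koszul_diff :: _ \<Rightarrow> _ \<Rightarrow> 'k) (Bas i) (Bas (i - 1))"
    proof
      assume ind: "indep (koszul_diff :: _ \<Rightarrow> _ \<Rightarrow> 'k) (Bas i) (Bas (i - 1))"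
      have h: "\<forall>y\<in>Bas (i - 1). (\<Sum>t\<in>Bas i. ((-1::'k) ^ Nsg t) * koszul_diff t y) = 0"
      proof
        fix y assume y: "y \<in> Bas (i - 1)"
        then have yb: "y \<subseteq> B" "card y = i - 1" "inK y" unfolding Bas_def basis_iff by auto
        have "Suc (card y) = i" using yb(2) False by simp
        moreover have "card y + d + 1 = card B" using yb(2) False ci by simp
        ultimately show "(\<Sum>t\<in>Bas i. ((-1::'k) ^ Nsg t) * koszul_diff t y) = 0"
          using cycle_zero[OF good yb(1), where 'k='k] yb(3) unfolding inK_def Bas_def by metis
      qed
      have "(-1::'k) ^ Nsg Sc = 0"
        using ind[unfolded indep_def, rule_format, of "\<lambda>t. (-1::'k) ^ Nsg t"] h ScB by blast
      then show False by simp
    qed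
    then have "colrank (koszul_diff :: _ \<Rightarrow> _ \<Rightarrow> 'k) (Bas i) (Bas (i - 1)) < card (Bas i)"
      by (rule colrank_less[OF finBas])
    then show ?thesis unfolding koszul_rank_def Bas_def using False by simp
  qed
  then show ?thesis unfolding multigraded_betti_def r1 Bas_def by simp
qed

lemma sqf_betti:
  "multigraded_betti (TYPE('k::field)) V (ferrers_mem F) i b = (if goodB \<and> i + d = card B then 1 else 0)"
  using sqf_upper[where 'k='k, of i] sqf_lower[where 'k='k, of i] by (auto split: if_splits)

end

definition goodS :: "nat list \<Rightarrow> nat list set \<Rightarrow> (nat \<times> nat) set \<Rightarrow> bool" where
  "goodS n F Bs \<longleftrightarrow> (\<forall>j<length n. \<exists>l. (j, l) \<in> Bs) \<and> map (\<lambda>j. Max {l. (j, l) \<in> Bs}) [0..<length n] \<in> F"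

lemma beta_b:
  assumes fer: "is_ferrers n F" and supp: "\<forall>v. v \<notin> ferrers_vars n \<longrightarrow> b v = 0"
  shows "multigraded_betti (TYPE('k::field)) (ferrers_vars n) (ferrers_mem F) i b =
     (if (\<forall>v. b v \<le> 1) \<and> goodS n F {v. 1 \<le> b v} \<and> i + length n = card {v. 1 \<le> b v} then 1 else 0)"
proof (cases "\<forall>v. b v \<le> 1")
  case True
  interpret sqf n F b using fer supp True by unfold_locales auto
  have "goodB = goodS n F {v. 1 \<le> b v}" unfolding goodB_def goodS_def mx_def B_def ..
  then show ?thesis using sqf_betti[where 'k='k, of i] True unfolding B_def by simp
next
  case False
  then obtain v where "2 \<le> b v" by (metis Suc_1 not_less_eq_eq)
  then have "multigraded_betti (TYPE('k)) (ferrers_vars n) (ferrers_mem F) i b = 0"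
    by (rule nonsqf_betti[OF supp finite_ferrers_vars])
  then show ?thesis using False by simp
qed

lemma fin_funs:
  assumes "finite V"
  shows "finite {b::'a \<Rightarrow> nat. (\<forall>v. v \<notin> V \<longrightarrow> b v = 0) \<and> (\<forall>v. b v \<le> N)}"
    (is "finite ?S")
proof -
  have inj: "inj_on (\<lambda>b. restrict b V) ?S"
  proof (rule inj_onI)
    fix b1 b2 assume b: "b1 \<in> ?S" "b2 \<in> ?S" "restrict b1 V = restrict b2 V"
    show "b1 = b2"
    proof
      fix v
      have "restrict b1 V v = restrict b2 V v" using b(3) by simp
      then show "b1 v = b2 v"
        using b by (cases "v \<in> V") (auto simp: restrict_def)
    qed
  qed
  have "(\<lambda>b. restrict b V) ` ?S \<subseteq> PiE V (\<lambda>_. {..N})" by auto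
  moreover have "finite (PiE V (\<lambda>_. {..N}))" using assms by (intro finite_PiE) auto
  ultimately have "finite ((\<lambda>b. restrict b V) ` ?S)" by (rule finite_subset)
  then show ?thesis using inj by (rule finite_imageD)
qed

lemma Bj_fin:
  assumes "finite V"
  shows "finite {b::'a \<Rightarrow> nat. (\<forall>v. v \<notin> V \<longrightarrow> b v = 0) \<and> int (\<Sum>v\<in>V. b v) = j}"
proof (rule finite_subset[OF _ fin_funs[OF assms, of "nat j"]])
  show "{b::'a \<Rightarrow> nat. (\<forall>v. v \<notin> V \<longrightarrow> b v = 0) \<and> int (\<Sum>v\<in>V. b v) = j}
      \<subseteq> {b. (\<forall>v. v \<notin> V \<longrightarrow> b v = 0) \<and> (\<forall>v. b v \<le> nat j)}"
  proof
    fix b :: "'a \<Rightarrow> nat"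
    assume "b \<in> {b::'a \<Rightarrow> nat. (\<forall>v. v \<notin> V \<longrightarrow> b v = 0) \<and> int (\<Sum>v\<in>V. b v) = j}"
    then have h: "\<forall>v. v \<notin> V \<longrightarrow> b v = 0" "int (sum b V) = j" by auto
    have "b v \<le> nat j" for v
    proof (cases "v \<in> V")
      case True
      then have "b v \<le> sum b V" using assms by (intro member_le_sum) auto
      then show ?thesis using h(2) by linarith
    next
      case False then show ?thesis using h by simp
    qed
    then show "b \<in> {b. (\<forall>v. v \<notin> V \<longrightarrow> b v = 0) \<and> (\<forall>v. b v \<le> nat j)}" using h by simp
  qed
qed

lemma sum_ind: "finite V \<Longrightarrow> Bs \<subseteq> V \<Longrightarrow> (\<Sum>v\<in>V. (if v \<in> Bs then 1 else 0 :: nat)) = card Bs"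
  by (simp add: sum.If_cases Int_absorb1)

lemma ind01: "\<forall>v. b v \<le> (1::nat) \<Longrightarrow> (\<lambda>v. if v \<in> {v. 1 \<le> b v} then 1 else 0) = b"
proof
  fix v assume "\<forall>v. b v \<le> (1::nat)"
  then have "b v = 0 \<or> b v = 1" using le_Suc_eq[of "b v" 0] by simp
  then show "(if v \<in> {v. 1 \<le> b v} then 1 else 0) = b v" by auto
qed

lemma betti_count:
  assumes fer: "is_ferrers n F"
  shows "betti (TYPE('k::field)) (ferrers_vars n) (ferrers_mem F) i j =
    of_nat (card {Bs. Bs \<subseteq> ferrers_vars n \<and> goodS n F Bs \<and> i + length n = card Bs \<and> int (card Bs) = j})"
proof -
  let ?V = "ferrers_vars n"
  define Bj where "Bj = {b::nat\<times>nat \<Rightarrow> nat. (\<forall>v. v \<notin> ?V \<longrightarrow> b v = 0) \<and> int (\<Sum>v\<in>?V. b v) = j}"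
  define cond where "cond b \<longleftrightarrow> (\<forall>v. b v \<le> 1) \<and> goodS n F {v. 1 \<le> b v} \<and> i + length n = card {v. 1 \<le> b v}" for b :: "nat\<times>nat \<Rightarrow> nat"
  have finBj: "finite Bj" unfolding Bj_def by (rule Bj_fin[OF finite_ferrers_vars])
  have "(\<Sum>b\<in>Bj. multigraded_betti (TYPE('k)) ?V (ferrers_mem F) i b) = (\<Sum>b\<in>Bj. if cond b then 1 else 0)"
  proof (rule sum.cong[OF refl])
    fix b assume "b \<in> Bj"
    then have "\<forall>v. v \<notin> ?V \<longrightarrow> b v = 0" unfolding Bj_def by blast
    then show "multigraded_betti (TYPE('k)) ?V (ferrers_mem F) i b = (if cond b then 1 else 0)"
      using beta_b[OF fer, where 'k='k] unfolding cond_def by blast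
  qed
  also have "\<dots> = card {b\<in>Bj. cond b}"
  proof -
    have "{b\<in>Bj. cond b} = Bj \<inter> {b. cond b}" by auto
    then show ?thesis using finBj by (simp add: sum.If_cases)
  qed
  also have "\<dots> = card {Bs. Bs \<subseteq> ?V \<and> goodS n F Bs \<and> i + length n = card Bs \<and> int (card Bs) = j}"
  proof (rule bij_betw_same_card[of "\<lambda>b. {v. 1 \<le> b v}"],
         rule bij_betw_byWitness[where f'="\<lambda>Bs v. if v \<in> Bs then 1 else 0"])
    show "\<forall>b\<in>{b\<in>Bj. cond b}. (\<lambda>v. if v \<in> {v. 1 \<le> b v} then 1 else 0) = b"
    proof safe
      fix b assume "b \<in> Bj" "cond b"
      then have "\<forall>v. b v \<le> 1" unfolding cond_def by simp
      then show "(\<lambda>v. if v \<in> {v. 1 \<le> b v} then 1 else 0) = b"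
        by (rule ind01)
    qed
    show "\<forall>Bs\<in>{Bs. Bs \<subseteq> ?V \<and> goodS n F Bs \<and> i + length n = card Bs \<and> int (card Bs) = j}.
        {v. 1 \<le> (if v \<in> Bs then 1 else 0::nat)} = Bs" by auto
    show "(\<lambda>b. {v. 1 \<le> b v}) ` {b\<in>Bj. cond b} \<subseteq> {Bs. Bs \<subseteq> ?V \<and> goodS n F Bs \<and> i + length n = card Bs \<and> int (card Bs) = j}"
    proof (rule image_subsetI)
      fix b assume "b \<in> {b\<in>Bj. cond b}"
      then have b: "b \<in> Bj" "cond b" by auto
      have bz: "\<forall>v. v \<notin> ?V \<longrightarrow> b v = 0" "int (\<Sum>v\<in>?V. b v) = j"
        using b(1) unfolding Bj_def by blast+
      have sub: "{v. 1 \<le> b v} \<subseteq> ?V"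
      proof
        fix x assume "x \<in> {v. 1 \<le> b v}"
        then have "b x \<noteq> 0" by simp
        show "x \<in> ?V"
        proof (rule ccontr)
          assume "x \<notin> ?V"
          then have "b x = 0" using bz(1) by blast
          with \<open>b x \<noteq> 0\<close> show False by contradiction
        qed
      qed
      have c: "goodS n F {v. 1 \<le> b v}" "i + length n = card {v. 1 \<le> b v}" "\<forall>v. b v \<le> 1"
        using b(2) unfolding cond_def by blast+
      have e: "b v = (if v \<in> {v. 1 \<le> b v} then 1 else 0)" for v
        using fun_cong[OF ind01[OF c(3)], of v] by (rule sym)
      have "(\<Sum>v\<in>?V. b v) = (\<Sum>v\<in>?V. if v \<in> {v. 1 \<le> b v} then 1 else 0)"
        by (rule sum.cong[OF refl], rule e)
      also have "\<dots> = card {v. 1 \<le> b v}" by (rule sum_ind[OF finite_ferrers_vars sub])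
      finally have "int (card {v. 1 \<le> b v}) = j" using bz(2) by simp
      then show "{v. 1 \<le> b v} \<in> {Bs. Bs \<subseteq> ?V \<and> goodS n F Bs \<and> i + length n = card Bs \<and> int (card Bs) = j}"
        using sub c by blast
    qed
    show "(\<lambda>Bs v. if v \<in> Bs then 1 else 0) ` {Bs. Bs \<subseteq> ?V \<and> goodS n F Bs \<and> i + length n = card Bs \<and> int (card Bs) = j} \<subseteq> {b\<in>Bj. cond b}"
    proof safe
      fix Bs assume Bs: "Bs \<subseteq> ?V" "goodS n F Bs" "i + length n = card Bs" "j = int (card Bs)"
      have e: "{v. 1 \<le> (if v \<in> Bs then 1 else 0::nat)} = Bs" by auto
      show "(\<lambda>v. if v \<in> Bs then 1 else 0) \<in> Bj"
        unfolding Bj_def using Bs sum_ind[OF finite_ferrers_vars Bs(1)] by (auto simp del: of_nat_sum)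
      show "cond (\<lambda>v. if v \<in> Bs then 1 else 0)" unfolding cond_def e using Bs by simp
    qed
  qed
  finally show ?thesis unfolding betti_def Bj_def by simp
qed

definition Pp :: "nat list \<Rightarrow> (nat \<times> nat) set" where "Pp p = (\<lambda>j. (j, p ! j)) ` {..<length p}"
definition Lowp :: "nat list \<Rightarrow> (nat \<times> nat) set" where "Lowp p = {(j, l). j < length p \<and> 1 \<le> l \<and> l < p ! j}"
definition mlist :: "nat \<Rightarrow> (nat \<times> nat) set \<Rightarrow> nat list" where "mlist d Bs = map (\<lambda>j. Max {l. (j, l) \<in> Bs}) [0..<d]"

lemma Lowp_eq: "Lowp p = (\<Union>j\<in>{..<length p}. Pair j ` {1..<p ! j})"
  unfolding Lowp_def by auto

lemma Lowp_fin: "finite (Lowp p)"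
  unfolding Lowp_eq by (intro finite_UN_I finite_imageI) auto

lemma sum_list_ge_len: "\<forall>x\<in>set p. 1 \<le> x \<Longrightarrow> length p \<le> sum_list (p :: nat list)"
  by (induction p) auto

lemma card_Lowp:
  assumes "\<forall>j<length p. 1 \<le> p ! j"
  shows "card (Lowp p) = sum_list p - length p"
proof -
  have "card (Lowp p) = (\<Sum>j<length p. card (Pair j ` {1..<p ! j}))"
    unfolding Lowp_eq by (rule card_UN_disjoint) auto
  also have "\<dots> = (\<Sum>j<length p. p ! j - 1)"
    by (rule sum.cong[OF refl]) (simp add: card_image inj_on_def)
  also have "\<dots> = (\<Sum>j<length p. p ! j) - (\<Sum>j<length p. 1)"
    using assms by (intro sum_subtractf_nat) auto
  also have "(\<Sum>j<length p. p ! j) = sum_list p"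
    by (simp add: sum_list_sum_nth atLeast0LessThan)
  finally show ?thesis by simp
qed

lemma card_Pp: "card (Pp p) = length p"
  unfolding Pp_def by (subst card_image) (auto simp: inj_on_def)

lemma Pp_Lowp_disj: "Pp p \<inter> Lowp p = {}"
proof -
  have "x \<notin> Lowp p" if "x \<in> Pp p" for x
  proof -
    obtain j where j: "x = (j, p ! j)" using \<open>x \<in> Pp p\<close> unfolding Pp_def by auto
    then show ?thesis unfolding Lowp_def by auto
  qed
  then show ?thesis by blast
qed

context
  fixes n :: "nat list" and F :: "nat list set"
  assumes fer: "is_ferrers n F"
begin

lemma F_props: "p \<in> F \<Longrightarrow> length p = length n \<and> (\<forall>j<length n. 1 \<le> p ! j \<and> p ! j \<le> n ! j)"
proof -
  assume p: "p \<in> F"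
  have "\<forall>p\<in>F. length p = length n \<and> (\<forall>j < length n. 1 \<le> p ! j \<and> p ! j \<le> n ! j)"
    using fer unfolding is_ferrers_def by (rule conjunct1)
  then show ?thesis using p by simp
qed

lemma F_fin: "finite F"
proof -
  have "F \<subseteq> {xs. set xs \<subseteq> {..sum_list n} \<and> length xs = length n}"
  proof
    fix p assume p: "p \<in> F"
    have "set p \<subseteq> {..sum_list n}"
    proof
      fix x assume "x \<in> set p"
      then obtain j where j: "j < length p" "x = p ! j" by (auto simp: in_set_conv_nth)
      then have "x \<le> n ! j" using F_props[OF p] by auto
      also have "n ! j \<le> sum_list n" using j F_props[OF p] by (intro member_le_sum_list) auto
      finally show "x \<in> {..sum_list n}" by simp
    qed
    then show "p \<in> {xs. set xs \<subseteq> {..sum_list n} \<and> length xs = length n}" using F_props[OF p] by simp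
  qed
  then show ?thesis using finite_lists_length_eq[of "{..sum_list n}" "length n"] finite_subset by blast
qed

definition "Cp i p = {Bs. Bs \<subseteq> ferrers_vars n \<and> (\<forall>j<length n. \<exists>l. (j, l) \<in> Bs) \<and> mlist (length n) Bs = p \<and> card Bs = i + length n}"

lemma card_Cp:
  assumes p: "p \<in> F"
  shows "card (Cp i p) = (sum_list p - length n) choose i"
proof -
  have lp: "length p = length n" and pb: "\<forall>j<length n. 1 \<le> p ! j \<and> p ! j \<le> n ! j" using F_props[OF p] by auto
  have PpV: "Pp p \<subseteq> ferrers_vars n" unfolding Pp_def ferrers_vars_def using lp pb by auto
  have LowV: "Lowp p \<subseteq> ferrers_vars n" unfolding Lowp_def ferrers_vars_def using lp pb by fastforce
  have finPp: "finite (Pp p)" unfolding Pp_def by simp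
  have "card (Cp i p) = card {Y. Y \<subseteq> Lowp p \<and> card Y = i}"
  proof (rule bij_betw_same_card[of "\<lambda>Bs. Bs - Pp p"], rule bij_betw_byWitness[where f'="\<lambda>Y. Y \<union> Pp p"])
    have Cfacts: "Pp p \<subseteq> Bs \<and> Bs - Pp p \<subseteq> Lowp p \<and> card (Bs - Pp p) = i" if Bs: "Bs \<in> Cp i p" for Bs
    proof -
      have B: "Bs \<subseteq> ferrers_vars n" "\<forall>j<length n. \<exists>l. (j, l) \<in> Bs" "mlist (length n) Bs = p"
        "card Bs = i + length n" using Bs unfolding Cp_def by auto
      have finB: "finite Bs" using B(1) finite_ferrers_vars finite_subset by blast
      have colfin: "finite {l. (j, l) \<in> Bs}" for j
        using finB by (rule finite_subset[rotated, OF finite_imageI[of _ snd]]) force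
      have mx: "Max {l. (j, l) \<in> Bs} = p ! j" if "j < length n" for j
        using B(3) that unfolding mlist_def by auto
      have sub: "Pp p \<subseteq> Bs"
      proof
        fix x assume "x \<in> Pp p"
        then obtain j where j: "j < length n" "x = (j, p ! j)" unfolding Pp_def using lp by auto
        have "{l. (j, l) \<in> Bs} \<noteq> {}" using B(2) j by auto
        then have "Max {l. (j, l) \<in> Bs} \<in> {l. (j, l) \<in> Bs}" using colfin by (intro Max_in)
        then show "x \<in> Bs" using mx[OF j(1)] j by simp
      qed
      have low: "Bs - Pp p \<subseteq> Lowp p"
      proof
        fix x assume x: "x \<in> Bs - Pp p"
        obtain j l where jl: "x = (j, l)" by fastforce
        have "j < length n" "1 \<le> l" using x jl B(1) unfolding ferrers_vars_def by auto
        moreover have "l \<le> p ! j" using mx[OF \<open>j < length n\<close>] colfin[of j] x jl by (metis Max_ge DiffD1 mem_Collect_eq)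
        moreover have "l \<noteq> p ! j" using x jl \<open>j < length n\<close> lp unfolding Pp_def by auto
        ultimately show "x \<in> Lowp p" using jl lp unfolding Lowp_def by auto
      qed
      have "card (Bs - Pp p) = card Bs - card (Pp p)" using sub finB by (simp add: card_Diff_subset finite_subset)
      then have "card (Bs - Pp p) = i" using B(4) card_Pp[of p] lp by simp
      with sub low show ?thesis by simp
    qed
    show "\<forall>a\<in>Cp i p. a - Pp p \<union> Pp p = a" using Cfacts by auto
    show "\<forall>a'\<in>{Y. Y \<subseteq> Lowp p \<and> card Y = i}. a' \<union> Pp p - Pp p = a'" using Pp_Lowp_disj by auto
    show "(\<lambda>Bs. Bs - Pp p) ` Cp i p \<subseteq> {Y. Y \<subseteq> Lowp p \<and> card Y = i}" using Cfacts by auto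
    show "(\<lambda>Y. Y \<union> Pp p) ` {Y. Y \<subseteq> Lowp p \<and> card Y = i} \<subseteq> Cp i p"
    proof (rule image_subsetI)
      fix Y assume "Y \<in> {Y. Y \<subseteq> Lowp p \<and> card Y = i}"
      then have Y: "Y \<subseteq> Lowp p" "card Y = i" by auto
      have finY: "finite Y" using Y(1) Lowp_fin finite_subset by blast
      have V: "Y \<union> Pp p \<subseteq> ferrers_vars n" using Y LowV PpV by auto
      have col: "\<forall>j<length n. \<exists>l. (j, l) \<in> Y \<union> Pp p" unfolding Pp_def using lp by auto
      have mx: "Max {l. (j, l) \<in> Y \<union> Pp p} = p ! j" if j: "j < length n" for j
      proof (rule Max_eqI)
        have "{l. (j, l) \<in> Y \<union> Pp p} \<subseteq> snd ` (Y \<union> Pp p)" by force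
        then show "finite {l. (j, l) \<in> Y \<union> Pp p}" using finY finPp finite_subset by blast
        show "p ! j \<in> {l. (j, l) \<in> Y \<union> Pp p}" unfolding Pp_def using j lp by auto
        fix l assume "l \<in> {l. (j, l) \<in> Y \<union> Pp p}"
        then show "l \<le> p ! j" using Y(1) unfolding Pp_def Lowp_def by auto
      qed
      have ml: "mlist (length n) (Y \<union> Pp p) = p"
        by (rule nth_equalityI) (use mx lp in \<open>auto simp: mlist_def simp del: Un_iff\<close>)
      have "card (Y \<union> Pp p) = card Y + card (Pp p)"
        using Y(1) Pp_Lowp_disj finY finPp by (intro card_Un_disjoint) auto
      then have "card (Y \<union> Pp p) = i + length n" using Y(2) card_Pp lp by simp
      then show "Y \<union> Pp p \<in> Cp i p" unfolding Cp_def using V col ml by simp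
    qed
  qed
  also have "\<dots> = card (Lowp p) choose i" by (rule n_subsets[OF Lowp_fin])
  also have "card (Lowp p) = sum_list p - length n" using card_Lowp[of p] lp pb by simp
  finally show ?thesis .
qed

lemma count_sets:
  "card {Bs. Bs \<subseteq> ferrers_vars n \<and> goodS n F Bs \<and> i + length n = card Bs \<and> int (card Bs) = j} =
    (if j = int (i + length n) then (\<Sum>p\<in>F. (sum_list p - length n) choose i) else 0)"
proof (cases "j = int (i + length n)")
  case False
  then have E: "{Bs. Bs \<subseteq> ferrers_vars n \<and> goodS n F Bs \<and> i + length n = card Bs \<and> int (card Bs) = j} = {}"
    by auto
  show ?thesis unfolding E using False by simp
next
  case True
  have eq: "{Bs. Bs \<subseteq> ferrers_vars n \<and> goodS n F Bs \<and> i + length n = card Bs \<and> int (card Bs) = j}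
      = (\<Union>p\<in>F. Cp i p)"
  proof
    show "{Bs. Bs \<subseteq> ferrers_vars n \<and> goodS n F Bs \<and> i + length n = card Bs \<and> int (card Bs) = j}
        \<subseteq> (\<Union>p\<in>F. Cp i p)"
    proof
      fix Bs assume "Bs \<in> {Bs. Bs \<subseteq> ferrers_vars n \<and> goodS n F Bs \<and> i + length n = card Bs \<and> int (card Bs) = j}"
      then have Bs: "Bs \<subseteq> ferrers_vars n" "goodS n F Bs" "i + length n = card Bs" by auto
      then have "mlist (length n) Bs \<in> F" "Bs \<in> Cp i (mlist (length n) Bs)"
        unfolding goodS_def Cp_def mlist_def by auto
      then show "Bs \<in> (\<Union>p\<in>F. Cp i p)" by blast
    qed
    show "(\<Union>p\<in>F. Cp i p) \<subseteq> {Bs. Bs \<subseteq> ferrers_vars n \<and> goodS n F Bs \<and> i + length n = card Bs \<and> int (card Bs) = j}"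
      using True unfolding Cp_def goodS_def mlist_def by auto
  qed
  have finC: "finite (Cp i p)" for p
  proof -
    have "Cp i p \<subseteq> Pow (ferrers_vars n)" unfolding Cp_def by auto
    then show ?thesis using finite_ferrers_vars finite_subset by blast
  qed
  have "card (\<Union>p\<in>F. Cp i p) = (\<Sum>p\<in>F. card (Cp i p))"
    using finC by (intro card_UN_disjoint[OF F_fin]) (auto simp: Cp_def)
  also have "\<dots> = (\<Sum>p\<in>F. (sum_list p - length n) choose i)"
    by (rule sum.cong[OF refl]) (rule card_Cp)
  finally show ?thesis using eq True by simp
qed

end

lemma prod_abs_fact:
  assumes "i \<le> k"
  shows "(\<Prod>l\<in>{0..<Suc k} - {i}. (of_int \<bar>int i - int l\<bar> :: rat)) = fact i * fact (k - i)"
proof -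
  have split: "{0..<Suc k} - {i} = {0..<i} \<union> {Suc i..k}" using assms by auto
  have "(\<Prod>l\<in>{0..<Suc k} - {i}. (of_int \<bar>int i - int l\<bar> :: rat)) =
      (\<Prod>l\<in>{0..<i}. (of_int \<bar>int i - int l\<bar> :: rat)) * (\<Prod>l\<in>{Suc i..k}. (of_int \<bar>int i - int l\<bar> :: rat))"
    unfolding split by (rule prod.union_disjoint) auto
  also have "(\<Prod>l\<in>{0..<i}. (of_int \<bar>int i - int l\<bar> :: rat)) = (\<Prod>l\<in>{0..<i}. of_nat (i - l))"
    by (rule prod.cong[OF refl]) (auto simp: of_nat_diff)
  also have "\<dots> = fact i" by (simp add: fact_prod_rev)
  also have "(\<Prod>l\<in>{Suc i..k}. (of_int \<bar>int i - int l\<bar> :: rat)) = (\<Prod>l\<in>{Suc i..k}. of_nat (l - i))"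
    by (rule prod.cong[OF refl]) (auto simp: of_nat_diff)
  also have "\<dots> = (\<Prod>m\<in>{1..k - i}. of_nat m)"
  proof -
    have e: "{Suc i..k} = {1 + i..(k - i) + i}" using assms by auto
    have "(\<Prod>l\<in>{Suc i..k}. (of_nat (l - i) :: rat)) = (\<Prod>l\<in>{1 + i..(k - i) + i}. of_nat (l - i))"
      by (simp only: e)
    also have "\<dots> = (\<Prod>m\<in>{1..k - i}. of_nat (m + i - i))"
      by (rule prod.shift_bounds_cl_nat_ivl)
    finally show ?thesis by simp
  qed
  also have "\<dots> = fact (k - i)" by (simp add: fact_prod)
  finally show ?thesis .
qed

lemma pure_diag_seg:
  "pure_diagram [int d .. int d + int k] i j =
     (if i \<le> k \<and> j = int d + int i then 1 / (fact i * fact (k - i)) else 0)"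
proof -
  let ?s = "[int d .. int d + int k]"
  have len: "length ?s = Suc k" by simp
  have nth: "?s ! l = int d + int l" if "l < Suc k" for l using that by simp
  show ?thesis
  proof (cases "i \<le> k \<and> j = int d + int i")
    case True
    have "pure_diagram ?s i j = (\<Prod>l\<in>{0..<Suc k} - {i}. 1 / of_int \<bar>?s ! i - ?s ! l\<bar>)"
      unfolding pure_diagram_def len using True nth by simp
    also have "\<dots> = (\<Prod>l\<in>{0..<Suc k} - {i}. 1 / (of_int \<bar>int i - int l\<bar> :: rat))"
      by (rule prod.cong[OF refl]) (use True nth in auto)
    also have "\<dots> = 1 / (\<Prod>l\<in>{0..<Suc k} - {i}. (of_int \<bar>int i - int l\<bar> :: rat))"
      by (simp add: prod_dividef)
    also have "\<dots> = 1 / (fact i * fact (k - i))" using prod_abs_fact True by simp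
    finally show ?thesis using True by simp
  next
    case False
    then show ?thesis unfolding pure_diagram_def len using nth by auto
  qed
qed

theorem proposition3p2:
  fixes K :: "'k::field itself" and n :: "nat list" and F :: "nat list set"
  assumes "1 \<le> length n" and "is_ferrers n F"
  shows "bs_decomposition (betti K (ferrers_vars n) (ferrers_mem F))
           (map (\<lambda>k. (alpha F (length n) k * fact k, [int (length n) .. int (length n) + int k]))
                (rev (sorted_list_of_set {k. alpha F (length n) k \<noteq> 0})))"
proof -
  note fer = assms(2)
  define d where "d = length n"
  define Ks where "Ks = {k. alpha F d k \<noteq> 0}"
  define g where "g p = sum_list p - d" for p :: "nat list"
  define f where "f k = (alpha F d k * fact k, [int d .. int d + int k])" for k
  have finF: "finite F" by (rule F_fin[OF fer])
  have sumge: "d \<le> sum_list p" if "p \<in> F" for p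
  proof -
    have pp: "length p = d" "\<forall>j<d. 1 \<le> p ! j" using F_props[OF fer that] d_def by auto
    have "\<forall>x\<in>set p. 1 \<le> x" using pp by (auto simp: in_set_conv_nth)
    then show ?thesis using sum_list_ge_len pp(1) by metis
  qed
  have fib: "{p\<in>F. g p = k} = {p\<in>F. sum_list p = k + d}" for k
    using sumge unfolding g_def by force
  have Ks_eq: "Ks = g ` F"
  proof
    show "Ks \<subseteq> g ` F"
    proof
      fix k assume "k \<in> Ks"
      then have "card {p\<in>F. sum_list p = k + d} \<noteq> 0" unfolding Ks_def alpha_def by simp
      then obtain p where "p \<in> F" "sum_list p = k + d" by (metis (mono_tags, lifting) Collect_empty_eq card.empty)
      then show "k \<in> g ` F" unfolding g_def by force
    qed
    show "g ` F \<subseteq> Ks"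
    proof
      fix k assume "k \<in> g ` F"
      then obtain p where p: "p \<in> F" "k = g p" by auto
      then have "p \<in> {p\<in>F. sum_list p = k + d}" using fib by blast
      then have "card {p\<in>F. sum_list p = k + d} \<noteq> 0" using finF by auto
      then show "k \<in> Ks" unfolding Ks_def alpha_def by simp
    qed
  qed
  have finKs: "finite Ks" unfolding Ks_eq using finF by simp
  have regroup: "(\<Sum>p\<in>F. g p choose i) = (\<Sum>k\<in>Ks. alpha F d k * (k choose i))" for i
  proof -
    have "(\<Sum>p\<in>F. g p choose i) = (\<Sum>k\<in>g ` F. \<Sum>p\<in>{p\<in>F. g p = k}. g p choose i)"
      by (rule sum.image_gen[OF finF])
    also have "\<dots> = (\<Sum>k\<in>g ` F. alpha F d k * (k choose i))"
    proof (rule sum.cong[OF refl])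
      fix k
      have "(\<Sum>p\<in>{p\<in>F. g p = k}. g p choose i) = (\<Sum>p\<in>{p\<in>F. g p = k}. k choose i)"
        by (rule sum.cong) auto
      also have "\<dots> = card {p\<in>F. g p = k} * (k choose i)" by simp
      finally show "(\<Sum>p\<in>{p\<in>F. g p = k}. g p choose i) = alpha F d k * (k choose i)"
        unfolding fib alpha_def .
    qed
    finally show ?thesis unfolding Ks_eq .
  qed
  have LHS: "betti K (ferrers_vars n) (ferrers_mem F) i j =
      of_nat (if j = int (i + d) then (\<Sum>k\<in>Ks. alpha F d k * (k choose i)) else 0)" for i j
  proof -
    have KT: "betti K = betti TYPE('k)"
      unfolding betti_def[abs_def] multigraded_betti_def[abs_def] koszul_rank_def[abs_def] by (rule refl)
    show ?thesis unfolding KT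
      using betti_count[OF fer, of i j, where 'k='k] count_sets[OF fer, of i j] regroup[of i]
      unfolding g_def d_def by simp
  qed
  have RHS: "(\<Sum>(a, \<sigma>) \<leftarrow> map f (rev (sorted_list_of_set Ks)). of_nat a * pure_diagram \<sigma> i j) =
      (\<Sum>k\<in>Ks. of_nat (alpha F d k * fact k) * pure_diagram [int d .. int d + int k] i j)" for i j
  proof -
    have "(\<Sum>(a, \<sigma>) \<leftarrow> map f (rev (sorted_list_of_set Ks)). of_nat a * pure_diagram \<sigma> i j) =
        sum_list (rev (map (\<lambda>k. of_nat (alpha F d k * fact k) * pure_diagram [int d .. int d + int k] i j) (sorted_list_of_set Ks)))"
      unfolding f_def by (simp add: rev_map comp_def)
    also have "\<dots> = sum_list (map (\<lambda>k. of_nat (alpha F d k * fact k) * pure_diagram [int d .. int d + int k] i j) (sorted_list_of_set Ks))"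
      by (rule sum_list_rev)
    also have "\<dots> = (\<Sum>k\<in>Ks. of_nat (alpha F d k * fact k) * pure_diagram [int d .. int d + int k] i j)"
      using finKs by (simp add: sum_list_distinct_conv_sum_set)
    finally show ?thesis .
  qed
  have eqn: "betti K (ferrers_vars n) (ferrers_mem F) i j =
      (\<Sum>(a, \<sigma>) \<leftarrow> map f (rev (sorted_list_of_set Ks)). of_nat a * pure_diagram \<sigma> i j)" for i j
  proof -
    have tm: "of_nat (alpha F d k * fact k) * pure_diagram [int d .. int d + int k] i j =
        (if j = int (i + d) then of_nat (alpha F d k * (k choose i)) else (0::rat))" for k
    proof (cases "j = int (i + d)")
      case True
      show ?thesis
      proof (cases "i \<le> k")
        case ik: True
        have "(of_nat (k choose i) :: rat) = fact k / (fact i * fact (k - i))" by (rule binomial_fact[OF ik])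
        then show ?thesis using True ik unfolding pure_diag_seg by (simp add: field_simps)
      next
        case False
        then show ?thesis using True unfolding pure_diag_seg by simp
      qed
    next
      case False
      then show ?thesis unfolding pure_diag_seg by auto
    qed
    show ?thesis unfolding LHS RHS tm by (simp add: of_nat_sum)
  qed
  have sorted: "sorted_wrt (\<lambda>x y. pure_le (snd x) (snd y) \<and> snd x \<noteq> snd y) (map f (rev (sorted_list_of_set Ks)))"
  proof -
    have st: "sorted_wrt (<) (sorted_list_of_set Ks)" by simp
    have "sorted_wrt (\<lambda>k1 k2. pure_le (snd (f k2)) (snd (f k1)) \<and> snd (f k2) \<noteq> snd (f k1)) (sorted_list_of_set Ks)"
    proof (rule sorted_wrt_mono_rel[OF _ st])
      fix k1 k2 :: nat assume "k1 < k2"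
      then show "pure_le (snd (f k2)) (snd (f k1)) \<and> snd (f k2) \<noteq> snd (f k1)"
        unfolding f_def pure_le_def
        by (auto dest: arg_cong[of _ _ length])
    qed
    then show ?thesis by (simp add: sorted_wrt_map sorted_wrt_rev)
  qed
  have pos: "\<forall>(a, \<sigma>) \<in> set (map f (rev (sorted_list_of_set Ks))). 0 < a \<and> is_degree_seq \<sigma>"
  proof
    fix x assume "x \<in> set (map f (rev (sorted_list_of_set Ks)))"
    then obtain k where k: "k \<in> Ks" "x = f k" using finKs by auto
    then have "alpha F d k \<noteq> 0" unfolding Ks_def by simp
    moreover have "[int d .. int d + int k] \<noteq> []" by (simp add: upto.simps)
    ultimately show "case x of (a, \<sigma>) \<Rightarrow> 0 < a \<and> is_degree_seq \<sigma>"
      using k unfolding f_def is_degree_seq_def by simp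
  qed
  show ?thesis
    unfolding bs_decomposition_def
    using pos sorted eqn unfolding f_def Ks_def d_def by blast
qed

end
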